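(* Let $m,n$ be positive integers with $m\geq n$. Then \begin{multline*} \sum_{k=0}^{n} \binom{m+k}{k} \binom{m}{k} \binom{n+k}{k} \binom{n}{k} \Bigl[ 1+k \bigl(H_{m+k}^{(1)} +H_{m-k}^{(1)} + H_{n+k}^{(1)} + H_{n-k}^{(1)} -4H_k^{(1)}\bigr) \Bigr]\\ +\sum_{k=n+1}^{m} (-1)^{k-n} \binom{m+k}{k} \binom{m}{k} \binom{n+k}{k} \Big/ \binom{k-1}{n} =(-1)^{m+n}. \end{multline*}
   Context: For non-negative integers $i$ and $n$, the generalized harmonic sum is $H^{(i)}_{n}:=\sum_{j=1}^{n} j^{-i}$ for $n\ge 1$, and $H^{(i)}_{0}:=0$. An empty sum (e.g. the second sum when $m=n$) equals $0$. *)

theory Defs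
  imports Complex_Main
begin

definition genH :: "nat \<Rightarrow> nat \<Rightarrow> real" where
  "genH i n = (\<Sum>j=1..n. 1 / (real j) ^ i)"

end

theory Submission imports Defs "HOL-Computational_Algebra.Polynomial" begin



lemma lagrange_poly:
  fixes x :: "nat \<Rightarrow> real" and p :: "real poly"
  assumes I: "finite I" and inj: "inj_on x I" and deg: "degree p < card I"
  shows "p = (\<Sum>j\<in>I. smult (poly p (x j) / (\<Prod>i\<in>I-{j}. (x j - x i))) (\<Prod>i\<in>I-{j}. [:- x i, 1:]))"
    (is "p = ?R")
proof (rule poly_eqI_degree[where A = "x ` I"])
  fix z assume "z \<in> x ` I"
  then obtain k where k: "k \<in> I" "z = x k" by auto
  have D: "(\<Prod>i\<in>I-{k}. (x k - x i)) \<noteq> 0"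
    using I inj k(1) by (auto simp: inj_on_def)
  have "poly ?R z = (\<Sum>j\<in>I. poly p (x j) / (\<Prod>i\<in>I-{j}. (x j - x i)) * (\<Prod>i\<in>I-{j}. (x k - x i)))"
    by (simp add: k poly_sum poly_prod)
  also have "\<dots> = poly p (x k) / (\<Prod>i\<in>I-{k}. (x k - x i)) * (\<Prod>i\<in>I-{k}. (x k - x i))
       + (\<Sum>j\<in>I-{k}. poly p (x j) / (\<Prod>i\<in>I-{j}. (x j - x i)) * (\<Prod>i\<in>I-{j}. (x k - x i)))"
    using I k(1) by (simp add: sum.remove)
  also have "(\<Sum>j\<in>I-{k}. poly p (x j) / (\<Prod>i\<in>I-{j}. (x j - x i)) * (\<Prod>i\<in>I-{j}. (x k - x i))) = 0"
  proof (rule sum.neutral, intro ballI)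
    fix j assume "j \<in> I - {k}"
    hence "k \<in> I - {j}" using k by auto
    hence "(\<Prod>i\<in>I-{j}. (x k - x i)) = 0" using I by (intro prod_zero) auto
    thus "poly p (x j) / (\<Prod>i\<in>I-{j}. (x j - x i)) * (\<Prod>i\<in>I-{j}. (x k - x i)) = 0" by simp
  qed
  finally show "poly p z = poly ?R z" using D k by simp
next
  show "degree p < card (x ` I)" using deg card_image[OF inj] by simp
next
  have "degree ?R \<le> card I - 1"
  proof (rule degree_sum_le)
    fix j assume j: "j \<in> I"
    have "degree (\<Prod>i\<in>I-{j}. [:- x i, 1:]) = card (I - {j})"
      by (subst degree_prod_sum_eq) auto
    also have "\<dots> = card I - 1" using I j by simp
    finally show "degree (smult (poly p (x j) / (\<Prod>i\<in>I-{j}. (x j - x i))) (\<Prod>i\<in>I-{j}. [:- x i, 1:])) \<le> card I - 1"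
      by (metis degree_smult_le le_trans order_refl)
  qed (use I in auto)
  thus "degree ?R < card (x ` I)" using deg card_image[OF inj] by simp
qed

lemma lagrange_coeff:
  fixes x :: "nat \<Rightarrow> real" and p :: "real poly"
  assumes I: "finite I" and inj: "inj_on x I" and deg: "degree p < card I"
  shows "coeff p (card I - 1) = (\<Sum>j\<in>I. poly p (x j) / (\<Prod>i\<in>I-{j}. (x j - x i)))"
proof -
  have "coeff p (card I - 1) = (\<Sum>j\<in>I. poly p (x j) / (\<Prod>i\<in>I-{j}. (x j - x i)) * coeff (\<Prod>i\<in>I-{j}. [:- x i, 1:]) (card I - 1))"
    by (subst lagrange_poly[OF assms]) (simp add: coeff_sum)
  also have "\<dots> = (\<Sum>j\<in>I. poly p (x j) / (\<Prod>i\<in>I-{j}. (x j - x i)))"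
  proof (rule sum.cong[OF refl])
    fix j assume j: "j \<in> I"
    have dg: "degree (\<Prod>i\<in>I-{j}. [:- x i, 1:]) = card I - 1"
      using I j by (subst degree_prod_sum_eq) auto
    have "coeff (\<Prod>i\<in>I-{j}. [:- x i, 1:]) (card I - 1) = lead_coeff (\<Prod>i\<in>I-{j}. [:- x i, 1:])"
      by (simp add: dg)
    also have "\<dots> = 1" by (simp add: lead_coeff_prod)
    finally show "poly p (x j) / (\<Prod>i\<in>I-{j}. (x j - x i)) * coeff (\<Prod>i\<in>I-{j}. [:- x i, 1:]) (card I - 1) = poly p (x j) / (\<Prod>i\<in>I-{j}. (x j - x i))" by simp
  qed
  finally show ?thesis .
qed

definition Pn :: "nat \<Rightarrow> real \<Rightarrow> real" where "Pn N t = (\<Prod>i=1..N. (t - real i))"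
definition cc :: "nat \<Rightarrow> nat \<Rightarrow> real" where
  "cc N j = Pn N (- real j) / (\<Prod>i\<in>{0..N}-{j}. (real i - real j))"

lemma poly_Pn: "poly (\<Prod>i\<in>{1..N}. [:- real i, 1:]) t = Pn N t"
  by (simp add: Pn_def poly_prod)

lemma degree_Pn: "degree (\<Prod>i\<in>{1..N}. [:- real i, 1:]) = N"
  by (subst degree_prod_sum_eq) auto

lemma lead_Pn: "coeff (\<Prod>i\<in>{1..N}. [:- real i, 1:]) N = 1"
  using lead_coeff_prod[of "\<lambda>i. [:- real i, 1:]" "{1..N}"] degree_Pn[of N] by simp

lemma inj_neg: "inj_on (\<lambda>i::nat. - real i) I" by (auto simp: inj_on_def)

lemma sum_cc: "(\<Sum>j=0..N. cc N j) = 1"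
proof -
  have "coeff (\<Prod>i\<in>{1..N}. [:- real i, 1:]) (card {0..N} - 1) =
     (\<Sum>j\<in>{0..N}. poly (\<Prod>i\<in>{1..N}. [:- real i, 1:]) (- real j) / (\<Prod>i\<in>{0..N}-{j}. (- real j - (- real i))))"
    by (rule lagrange_coeff[OF _ inj_neg]) (use degree_Pn[of N] in auto)
  thus ?thesis using lead_Pn[of N] by (simp add: Pn_def poly_prod cc_def algebra_simps)
qed

lemma pf:
  assumes "\<forall>i\<le>N. t + real i \<noteq> 0"
  shows "Pn N t / (\<Prod>i=0..N. (t + real i)) = (\<Sum>j=0..N. cc N j / (t + real j))"
proof -
  let ?p = "\<Prod>i\<in>{1..N}. [:- real i, 1:]"
  have "poly ?p t = poly (\<Sum>j\<in>{0..N}. smult (poly ?p (- real j) / (\<Prod>i\<in>{0..N}-{j}. (- real j - (- real i)))) (\<Prod>i\<in>{0..N}-{j}. [:- (- real i), 1:])) t"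
    by (subst lagrange_poly[OF _ inj_neg]) (use degree_Pn[of N] in auto)
  hence eq: "Pn N t = (\<Sum>j=0..N. cc N j * (\<Prod>i\<in>{0..N}-{j}. (t + real i)))"
    by (simp add: Pn_def poly_sum poly_prod cc_def algebra_simps)
  have "Pn N t / (\<Prod>i=0..N. (t + real i)) = (\<Sum>j=0..N. cc N j * (\<Prod>i\<in>{0..N}-{j}. (t + real i)) / (\<Prod>i=0..N. (t + real i)))"
    by (simp add: eq sum_divide_distrib)
  also have "\<dots> = (\<Sum>j=0..N. cc N j / (t + real j))"
  proof (rule sum.cong[OF refl])
    fix j assume j: "j \<in> {0..N}"
    have "(\<Prod>i=0..N. (t + real i)) = (t + real j) * (\<Prod>i\<in>{0..N}-{j}. (t + real i))"
      using j by (simp add: prod.remove)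
    moreover have "(\<Prod>i\<in>{0..N}-{j}. (t + real i)) \<noteq> 0" using assms by auto
    ultimately show "cc N j * (\<Prod>i\<in>{0..N}-{j}. (t + real i)) / (\<Prod>i=0..N. (t + real i)) = cc N j / (t + real j)"
      by simp
  qed
  finally show ?thesis .
qed

lemma der:
  assumes kN: "k \<le> N"
  shows "(\<Sum>j\<in>{0..N}-{k}. cc N j / (real j - real k)) =
    cc N k * ((\<Sum>i=1..N. 1 / (- real k - real i)) - (\<Sum>i\<in>{0..N}-{k}. 1 / (real i - real k)))"
proof -
  define \<phi> where "\<phi> t = Pn N t / (\<Prod>i\<in>{0..N}-{k}. (t + real i))" for t
  define \<psi> where "\<psi> t = (\<Sum>j\<in>{0..N}-{k}. cc N j / (t + real j))" for t
  define x where "x = - real k"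
  have \<phi>k: "\<phi> x = cc N k" by (simp add: \<phi>_def cc_def x_def)
  have Qnz: "(\<Prod>i\<in>{0..N}-{k}. (x + real i)) \<noteq> 0" by (auto simp: x_def)
  have d1: "\<And>i. ((\<lambda>t. t - real i) has_field_derivative 1) (at x)"
    by (auto intro!: derivative_eq_intros)
  have d2: "\<And>i. ((\<lambda>t. t + real i) has_field_derivative 1) (at x)"
    by (auto intro!: derivative_eq_intros)
  have dP: "((\<lambda>t. Pn N t) has_field_derivative (Pn N x * (\<Sum>i\<in>{1..N}. 1 / (x - real i)))) (at x)"
    unfolding Pn_def
    using has_field_derivative_prod'[of "{1..N}" "\<lambda>i t. t - real i" x "\<lambda>i. 1"] d1 d2
    by (auto simp: x_def)
  have dQ: "((\<lambda>t. \<Prod>i\<in>{0..N}-{k}. (t + real i)) has_field_derivative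
      ((\<Prod>i\<in>{0..N}-{k}. (x + real i)) * (\<Sum>i\<in>{0..N}-{k}. 1 / (x + real i)))) (at x)"
    using has_field_derivative_prod'[of "{0..N}-{k}" "\<lambda>i t. t + real i" x "\<lambda>i. 1"] d1 d2
    by (auto simp: x_def)
  have "(\<phi> has_field_derivative \<phi> x * ((\<Sum>i\<in>{1..N}. 1 / (x - real i)) - (\<Sum>i\<in>{0..N}-{k}. 1 / (x + real i)))) (at x)"
  proof -
    have "(\<phi> has_field_derivative
      (Pn N x * (\<Sum>i\<in>{1..N}. 1 / (x - real i)) * (\<Prod>i\<in>{0..N}-{k}. (x + real i)) -
       Pn N x * ((\<Prod>i\<in>{0..N}-{k}. (x + real i)) * (\<Sum>i\<in>{0..N}-{k}. 1 / (x + real i)))) /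
      ((\<Prod>i\<in>{0..N}-{k}. (x + real i)) * (\<Prod>i\<in>{0..N}-{k}. (x + real i)))) (at x)"
      unfolding \<phi>_def[abs_def] by (rule DERIV_divide[OF dP dQ Qnz])
    moreover have "(Pn N x * (\<Sum>i\<in>{1..N}. 1 / (x - real i)) * (\<Prod>i\<in>{0..N}-{k}. (x + real i)) -
       Pn N x * ((\<Prod>i\<in>{0..N}-{k}. (x + real i)) * (\<Sum>i\<in>{0..N}-{k}. 1 / (x + real i)))) /
      ((\<Prod>i\<in>{0..N}-{k}. (x + real i)) * (\<Prod>i\<in>{0..N}-{k}. (x + real i))) =
      \<phi> x * ((\<Sum>i\<in>{1..N}. 1 / (x - real i)) - (\<Sum>i\<in>{0..N}-{k}. 1 / (x + real i)))"
      using Qnz by (simp add: \<phi>_def field_simps)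
    ultimately show ?thesis by simp
  qed
  hence lim1: "((\<lambda>y. (\<phi> y - \<phi> x) / (y - x)) \<longlongrightarrow>
     \<phi> x * ((\<Sum>i\<in>{1..N}. 1 / (x - real i)) - (\<Sum>i\<in>{0..N}-{k}. 1 / (x + real i)))) (at x)"
    by (simp add: has_field_derivative_iff)
  have ev: "\<forall>\<^sub>F y in at x. (\<phi> y - \<phi> x) / (y - x) = \<psi> y"
    unfolding eventually_at
  proof (intro exI[of _ 1] conjI ballI impI)
    fix y :: real assume "y \<in> UNIV" and y: "y \<noteq> x \<and> dist y x < 1"
    have nz: "\<forall>i\<le>N. y + real i \<noteq> 0"
    proof (intro allI impI notI)
      fix i assume "i \<le> N" "y + real i = 0"
      hence "y = - real i" by simp
      with y have "i \<noteq> k" "\<bar>real k - real i\<bar> < 1" by (auto simp: x_def dist_real_def)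
      thus False by linarith
    qed
    have yk: "y + real k \<noteq> 0" using y by (auto simp: x_def)
    have "Pn N y / (\<Prod>i=0..N. (y + real i)) = (\<Sum>j=0..N. cc N j / (y + real j))"
      by (rule pf[OF nz])
    also have "\<dots> = cc N k / (y + real k) + \<psi> y"
      using kN by (simp add: \<psi>_def sum.remove)
    finally have e1: "Pn N y / (\<Prod>i=0..N. (y + real i)) = cc N k / (y + real k) + \<psi> y" .
    have "(\<Prod>i=0..N. (y + real i)) = (y + real k) * (\<Prod>i\<in>{0..N}-{k}. (y + real i))"
      using kN by (simp add: prod.remove)
    with e1 have "\<phi> y / (y + real k) = cc N k / (y + real k) + \<psi> y"
      by (simp add: \<phi>_def mult.commute)
    hence "\<phi> y = cc N k + (y + real k) * \<psi> y" using yk by (simp add: field_simps)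
    hence "\<phi> y - \<phi> x = (y + real k) * \<psi> y" using \<phi>k by simp
    moreover have "y - x = y + real k" by (simp add: x_def)
    ultimately have "(\<phi> y - \<phi> x) / (y - x) = (y + real k) * \<psi> y / (y + real k)" by (simp only:)
    thus "(\<phi> y - \<phi> x) / (y - x) = \<psi> y" using yk by simp
  qed simp
  have "isCont \<psi> x"
    unfolding \<psi>_def[abs_def] by (intro continuous_intros) (auto simp: x_def)
  hence lim2: "(\<psi> \<longlongrightarrow> \<psi> x) (at x)" by (simp add: isCont_def)
  have lim3: "((\<lambda>y. (\<phi> y - \<phi> x) / (y - x)) \<longlongrightarrow> \<psi> x) (at x)"
    using tendsto_cong[OF ev] lim2 by simp
  have "\<psi> x = \<phi> x * ((\<Sum>i\<in>{1..N}. 1 / (x - real i)) - (\<Sum>i\<in>{0..N}-{k}. 1 / (x + real i)))"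
    using tendsto_unique[OF _ lim3 lim1] by simp
  thus ?thesis unfolding \<phi>k by (simp add: \<psi>_def x_def)
qed

definition hh :: "nat \<Rightarrow> real" where "hh n = (\<Sum>j=1..n. 1 / real j)"

lemma genH_hh: "genH 1 n = hh n"
  by (simp add: genH_def hh_def)

lemma hh_Suc: "hh (Suc n) = hh n + 1 / real (Suc n)"
  by (simp add: hh_def)

lemma hh_lt: "hh k = (\<Sum>i<k. 1 / (real i + 1))"
proof (induction k)
  case 0 thus ?case by (simp add: hh_def)
next
  case (Suc k) thus ?case by (simp add: hh_Suc add.commute)
qed

lemma H1: "(\<Sum>i=1..N. 1 / (- real k - real i)) = -(hh (N + k) - hh k)"
proof (induction N)
  case 0 thus ?case by simp
next
  case (Suc N)
  have "(\<Sum>i=1..Suc N. 1 / (- real k - real i)) = (\<Sum>i=1..N. 1 / (- real k - real i)) + 1 / (- real k - real (Suc N))"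
    by simp
  also have "\<dots> = -(hh (N + k) - hh k) - 1 / real (Suc (N + k))"
  proof -
    have "1 / (- real k - real (Suc N)) = - (1 / real (Suc (N + k)))"
      by (simp add: field_simps)
    thus ?thesis using Suc by simp
  qed
  also have "\<dots> = -(hh (Suc N + k) - hh k)"
    by (simp add: hh_Suc)
  finally show ?case .
qed

lemma H2a: "(\<Sum>i<k. 1 / (real i - real k)) = - hh k"
proof -
  have "(\<Sum>i<k. 1 / (real i - real k)) = (\<Sum>i<k. 1 / (real (k - Suc i) - real k))"
    by (rule sum.nat_diff_reindex[symmetric])
  also have "\<dots> = (\<Sum>i<k. - (1 / (real i + 1)))"
    by (rule sum.cong[OF refl]) (auto simp: of_nat_diff field_simps)
  also have "\<dots> = - hh k" by (simp add: hh_lt sum_negf)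
  finally show ?thesis .
qed

lemma H2:
  assumes "k \<le> N"
  shows "(\<Sum>i\<in>{0..N}-{k}. 1 / (real i - real k)) = hh (N - k) - hh k"
  using assms
proof (induction N rule: dec_induct)
  case base
  have "{0..k}-{k} = {..<k}" by auto
  thus ?case using H2a by (simp add: hh_def)
next
  case (step N)
  have "{0..Suc N}-{k} = insert (Suc N) ({0..N}-{k})" using step by auto
  hence "(\<Sum>i\<in>{0..Suc N}-{k}. 1 / (real i - real k)) = 1 / (real (Suc N) - real k) + (\<Sum>i\<in>{0..N}-{k}. 1 / (real i - real k))"
    by simp
  also have "\<dots> = hh (Suc N - k) - hh k"
    using step by (simp add: Suc_diff_le hh_Suc of_nat_diff)
  finally show ?case .
qed

lemma prodA: "(\<Prod>i=1..N. (real j + real i)) = fact (N + j) / fact j"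
proof (induction N)
  case 0 thus ?case by simp
next
  case (Suc N)
  have "(\<Prod>i=1..Suc N. (real j + real i)) = (\<Prod>i=1..N. (real j + real i)) * (real j + real (Suc N))"
    by simp
  also have "\<dots> = fact (N + j) * real (Suc (N + j)) / fact j" using Suc by (simp add: algebra_simps)
  also have "\<dots> = fact (Suc N + j) / fact j" by (simp add: algebra_simps)
  finally show ?case .
qed

lemma prodB: "(\<Prod>i<j. (real i - real j)) = (-1)^j * fact j"
proof -
  have "(\<Prod>i<j. (real i - real j)) = (\<Prod>i<j. (real (j - Suc i) - real j))"
    by (rule prod.nat_diff_reindex[symmetric])
  also have "\<dots> = (\<Prod>i<j. (-1) * (real i + 1))"
    by (rule prod.cong[OF refl]) (auto simp: of_nat_diff field_simps)
  also have "\<dots> = (-1)^j * fact j"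
    by (induction j) (simp_all add: field_simps)
  finally show ?thesis .
qed

lemma prodC: "j \<le> N \<Longrightarrow> (\<Prod>i\<in>{Suc j..N}. (real i - real j)) = fact (N - j)"
proof (induction N rule: dec_induct)
  case base thus ?case by simp
next
  case (step N)
  hence "{Suc j..Suc N} = insert (Suc N) {Suc j..N}" by auto
  thus ?case using step by (simp add: Suc_diff_le of_nat_diff)
qed

lemma prodD: "j \<le> N \<Longrightarrow> (\<Prod>i\<in>{0..N}-{j}. (real i - real j)) = (-1)^j * fact j * fact (N - j)"
proof -
  assume jN: "j \<le> N"
  have "{0..N}-{j} = {..<j} \<union> {Suc j..N}" using jN by auto
  hence "(\<Prod>i\<in>{0..N}-{j}. (real i - real j)) = (\<Prod>i\<in>{..<j} \<union> {Suc j..N}. (real i - real j))"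
    by simp
  also have "\<dots> = (\<Prod>i<j. (real i - real j)) * (\<Prod>i\<in>{Suc j..N}. (real i - real j))"
    by (rule prod.union_disjoint) auto
  finally have "(\<Prod>i\<in>{0..N}-{j}. (real i - real j)) = (\<Prod>i<j. (real i - real j)) * (\<Prod>i\<in>{Suc j..N}. (real i - real j))" .
  thus ?thesis using prodB prodC[OF jN] by simp
qed

lemma Pn_neg: "Pn N (- real j) = (-1)^N * (fact (N + j) / fact j)"
proof -
  have "Pn N (- real j) = (\<Prod>i=1..N. (-1) * (real j + real i))"
    by (simp add: Pn_def)
  also have "\<dots> = (-1)^N * (\<Prod>i=1..N. (real j + real i))"
    unfolding prod.distrib by simp
  finally show ?thesis using prodA[where N=N and j=j] by simp
qed

lemma cc_closed:
  assumes "j \<le> N"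
  shows "cc N j = (-1)^(N+j) * real (N + j choose j) * real (N choose j)"
proof -
  have "cc N j = (-1)^N * (fact (N + j) / fact j) / ((-1)^j * fact j * fact (N - j))"
    by (simp add: cc_def Pn_neg prodD[OF assms])
  also have "\<dots> = (-1)^(N+j) * (fact (N + j) / (fact j * fact N)) * (fact N / (fact j * fact (N - j)))"
    by (simp add: power_add field_simps)
  also have "\<dots> = (-1)^(N+j) * real (N + j choose j) * real (N choose j)"
    using assms by (simp add: binomial_fact)
  finally show ?thesis .
qed

lemma prodE: "N < k \<Longrightarrow> (\<Prod>i=0..N. (real k - real i)) = fact k / fact (k - Suc N)"
proof (induction N)
  case 0
  then obtain k' where k: "k = Suc k'" by (cases k) auto
  thus ?case by simp
next
  case (Suc N)
  hence IH: "(\<Prod>i=0..N. (real k - real i)) = fact k / fact (k - Suc N)" by simp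
  obtain r where r: "k - Suc N = Suc r" using Suc.prems by (metis Suc_diff_Suc)
  have r2: "k - Suc (Suc N) = r" using r by simp
  have "(\<Prod>i=0..Suc N. (real k - real i)) = (\<Prod>i=0..N. (real k - real i)) * (real k - real (Suc N))"
    by simp
  also have "real k - real (Suc N) = real (k - Suc N)" using Suc.prems by (simp add: of_nat_diff)
  also have "\<dots> = real (Suc r)" using r by simp
  also have "(\<Prod>i=0..N. (real k - real i)) * real (Suc r) = fact k / fact (k - Suc N) * real (Suc r)"
    using IH by simp
  also have "fact k / fact (k - Suc N) * real (Suc r) = (fact k / fact (k - Suc (Suc N)) :: real)"
  proof -
    have ff: "(fact (k - Suc N) :: real) = real (Suc r) * fact (k - Suc (Suc N))"
      unfolding r r2 by simp
    have g: "\<And>A x F :: real. x \<noteq> 0 \<Longrightarrow> A / (x * F) * x = A / F" by simp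
    show ?thesis unfolding ff by (rule g) simp
  qed
  finally show ?case .
qed

lemma pf_out:
  assumes "N < k"
  shows "(\<Sum>j=0..N. cc N j / (real j - real k)) = - real (N + k choose k) / (real k * real (k - 1 choose N))"
proof -
  have nz: "\<forall>i\<le>N. - real k + real i \<noteq> 0" using assms by auto
  have "(\<Sum>j=0..N. cc N j / (real j - real k)) = Pn N (- real k) / (\<Prod>i=0..N. (- real k + real i))"
    using pf[OF nz] by simp
  also have "(\<Prod>i=0..N. (- real k + real i)) = (\<Prod>i=0..N. (-1) * (real k - real i))"
    by simp
  also have "\<dots> = - ((-1)^N * (fact k / fact (k - Suc N)))"
    unfolding prod.distrib using prodE[OF assms] by simp
  also have "Pn N (- real k) = (-1)^N * (fact (N + k) / fact k)" by (rule Pn_neg)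
  finally have e': "(\<Sum>j=0..N. cc N j / (real j - real k)) = (-1)^N * (fact (N + k) / fact k) / (- ((-1)^N * (fact k / fact (k - Suc N))))" .
  have g: "\<And>s A K F :: real. s \<noteq> 0 \<Longrightarrow> K \<noteq> 0 \<Longrightarrow> F \<noteq> 0 \<Longrightarrow>
      s * (A / K) / (- (s * (K / F))) = - (A * F / (K * K))"
    by (simp add: field_simps)
  have e: "(\<Sum>j=0..N. cc N j / (real j - real k)) = - (fact (N + k) * fact (k - Suc N) / (fact k * fact k))"
    unfolding e' by (rule g) simp_all
  have b1: "real (N + k choose k) = fact (N + k) / (fact k * fact N)"
    by (simp add: binomial_fact)
  have b2: "real (k - 1 choose N) = fact (k - 1) / (fact N * fact (k - 1 - N))"
    using assms by (simp add: binomial_fact)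
  have fk: "(fact k :: real) = real k * fact (k - 1)" using assms
    by (metis fact_reduce gr_implies_not0 neq0_conv)
  have kk: "k - Suc N = k - 1 - N" by simp
  have nz: "real k \<noteq> 0" using assms by simp
  have gen: "\<And>A F G Hh x::real. x \<noteq> 0 \<Longrightarrow> F \<noteq> 0 \<Longrightarrow> G \<noteq> 0 \<Longrightarrow> Hh \<noteq> 0 \<Longrightarrow>
     - (A * Hh / ((x * F) * (x * F))) = - (A / ((x * F) * G)) / (x * (F / (G * Hh)))"
    by (simp add: field_simps)
  show ?thesis unfolding e b1 b2 kk fk using gen[OF nz] by simp
qed

lemma split_lemma: "j \<noteq> (k::nat) \<Longrightarrow> (- real k) * c / (real j - real k) + (- real j) * c / (real k - real j) = (c::real)"
proof -
  assume "j \<noteq> k"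
  hence d: "real j - real k \<noteq> 0" by simp
  have e: "real k - real j = - (real j - real k)" by simp
  have "(- real j) * c / (- (real j - real k)) = (real j * c) / (real j - real k)"
    by (simp only: mult_minus_left minus_divide_divide)
  hence "(- real k) * c / (real j - real k) + (- real j) * c / (real k - real j)
      = ((- real k) * c + real j * c) / (real j - real k)"
    unfolding e by (simp only: add_divide_distrib)
  also have "(- real k) * c + real j * c = (real j - real k) * c" by (simp add: algebra_simps)
  also have "(real j - real k) * c / (real j - real k) = c" using d by simp
  finally show ?thesis .
qed

lemma swap_off:
  fixes F :: "nat \<Rightarrow> nat \<Rightarrow> real"
  assumes "finite I"
  shows "(\<Sum>k\<in>I. \<Sum>j\<in>I-{k}. F k j) = (\<Sum>j\<in>I. \<Sum>k\<in>I-{j}. F k j)"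
proof -
  have e: "\<And>k. k \<in> I \<Longrightarrow> (\<Sum>j\<in>I-{k}. F k j) = (\<Sum>j\<in>I. if j = k then 0 else F k j)"
    using assms by (simp add: sum.remove sum.If_cases Diff_eq Int_commute)
  have e2: "\<And>j. j \<in> I \<Longrightarrow> (\<Sum>k\<in>I-{j}. F k j) = (\<Sum>k\<in>I. if j = k then 0 else F k j)"
    using assms by (simp add: sum.remove sum.If_cases Diff_eq Int_commute)
  have "(\<Sum>k\<in>I. \<Sum>j\<in>I-{k}. F k j) = (\<Sum>k\<in>I. \<Sum>j\<in>I. if j = k then 0 else F k j)"
    using e by simp
  also have "\<dots> = (\<Sum>j\<in>I. \<Sum>k\<in>I. if j = k then 0 else F k j)" by (rule sum.swap)
  also have "\<dots> = (\<Sum>j\<in>I. \<Sum>k\<in>I-{j}. F k j)" using e2 by simp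
  finally show ?thesis .
qed

lemma regroup:
  fixes a B :: "nat \<Rightarrow> real"
  assumes I: "finite I"
  shows "(\<Sum>k\<in>I. \<Sum>j\<in>I. a k * B j) =
    (\<Sum>k\<in>I. a k * B k - real k * a k * (\<Sum>j\<in>I-{k}. B j / (real j - real k))
                 - real k * B k * (\<Sum>j\<in>I-{k}. a j / (real j - real k)))"
proof -
  have split: "a k * B j = (- real k) * a k * B j / (real j - real k) + (- real j) * a k * B j / (real k - real j)"
    if "j \<noteq> k" for j k
    using split_lemma[OF that, of "a k * B j"] by (simp add: mult.assoc)
  have "(\<Sum>k\<in>I. \<Sum>j\<in>I. a k * B j) = (\<Sum>k\<in>I. a k * B k + (\<Sum>j\<in>I-{k}. a k * B j))"
    using I by (simp add: sum.remove)
  also have "\<dots> = (\<Sum>k\<in>I. a k * B k) + (\<Sum>k\<in>I. \<Sum>j\<in>I-{k}. (- real k) * a k * B j / (real j - real k))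
      + (\<Sum>k\<in>I. \<Sum>j\<in>I-{k}. (- real j) * a k * B j / (real k - real j))"
  proof -
    have inner: "(\<Sum>j\<in>I-{k}. a k * B j) = (\<Sum>j\<in>I-{k}. (- real k) * a k * B j / (real j - real k))
      + (\<Sum>j\<in>I-{k}. (- real j) * a k * B j / (real k - real j))" for k
      unfolding sum.distrib[symmetric] by (rule sum.cong[OF refl]) (rule split, auto)
    show ?thesis unfolding inner sum.distrib by simp
  qed
  also have "(\<Sum>k\<in>I. \<Sum>j\<in>I-{k}. (- real j) * a k * B j / (real k - real j))
     = (\<Sum>j\<in>I. \<Sum>k\<in>I-{j}. (- real j) * a k * B j / (real k - real j))"
    by (rule swap_off[OF I])
  also have "\<dots> = (\<Sum>k\<in>I. - real k * B k * (\<Sum>j\<in>I-{k}. a j / (real j - real k)))"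
    by (simp add: sum_distrib_left mult_ac)
  also have "(\<Sum>k\<in>I. \<Sum>j\<in>I-{k}. (- real k) * a k * B j / (real j - real k))
     = (\<Sum>k\<in>I. - real k * a k * (\<Sum>j\<in>I-{k}. B j / (real j - real k)))"
    by (simp add: sum_distrib_left mult_ac)
  finally show ?thesis by (simp add: sum.distrib sum_subtractf sum_negf)
qed


theorem theorem1p2:
  fixes m n :: nat
  assumes "m \<ge> 1" and "n \<ge> 1" and "m \<ge> n"
  shows "(\<Sum>k=0..n. real (m + k choose k) * real (m choose k) * real (n + k choose k) * real (n choose k)
            * (1 + real k * (genH 1 (m + k) + genH 1 (m - k) + genH 1 (n + k) + genH 1 (n - k) - 4 * genH 1 k)))
       + (\<Sum>k=n+1..m. (-1) ^ (k - n) * real (m + k choose k) * real (m choose k) * real (n + k choose k)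
            / real (k - 1 choose n))
       = (-1) ^ (m + n)"
proof -
  define T1 where "T1 k = real (m + k choose k) * real (m choose k) * real (n + k choose k) * real (n choose k)
            * (1 + real k * (genH 1 (m + k) + genH 1 (m - k) + genH 1 (n + k) + genH 1 (n - k) - 4 * genH 1 k))" for k
  define T2 where "T2 k = (-1) ^ (k - n) * real (m + k choose k) * real (m choose k) * real (n + k choose k)
            / real (k - 1 choose n)" for k
  define B where "B j = (if j \<le> n then cc n j else 0)" for j
  define SA where "SA k = (\<Sum>j\<in>{0..m}-{k}. cc m j / (real j - real k))" for k
  define SB where "SB k = (\<Sum>j\<in>{0..m}-{k}. B j / (real j - real k))" for k
  define R where "R k = cc m k * B k - real k * cc m k * SB k - real k * B k * SA k" for k
  have nm: "n \<le> m" using assms by simp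
  have sB: "(\<Sum>j\<in>{0..m}. B j) = 1"
  proof -
    have "(\<Sum>j\<in>{0..m}. B j) = (\<Sum>j\<in>{x\<in>{0..m}. x \<le> n}. cc n j)"
      unfolding B_def by (rule sum.inter_filter[symmetric]) simp
    also have "{x\<in>{0..m}. x \<le> n} = {0..n}" using nm by auto
    finally show ?thesis using sum_cc[of n] by simp
  qed
  have SB_eq: "SB k = (\<Sum>j\<in>{0..n}-{k}. cc n j / (real j - real k))" for k
  proof -
    have "SB k = (\<Sum>j\<in>{0..m}-{k}. if j \<le> n then cc n j / (real j - real k) else 0)"
      unfolding SB_def B_def by (rule sum.cong) auto
    also have "\<dots> = (\<Sum>j\<in>{x\<in>{0..m}-{k}. x \<le> n}. cc n j / (real j - real k))"
      by (rule sum.inter_filter[symmetric]) simp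
    also have "{x\<in>{0..m}-{k}. x \<le> n} = {0..n}-{k}" using nm by auto
    finally show ?thesis .
  qed
  have "1 = (\<Sum>k\<in>{0..m}. cc m k) * (\<Sum>j\<in>{0..m}. B j)"
    using sum_cc[of m] sB by simp
  also have "\<dots> = (\<Sum>k\<in>{0..m}. \<Sum>j\<in>{0..m}. cc m k * B j)"
    by (rule sum_product)
  also have "\<dots> = (\<Sum>k\<in>{0..m}. R k)"
    unfolding regroup[OF finite_atLeastAtMost] R_def SA_def SB_def ..
  also have "{0..m} = {0..n} \<union> {Suc n..m}" using nm by auto
  also have "(\<Sum>k\<in>{0..n} \<union> {Suc n..m}. R k) = (\<Sum>k\<in>{0..n}. R k) + (\<Sum>k\<in>{Suc n..m}. R k)"
    by (rule sum.union_disjoint) auto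
  also have "(\<Sum>k\<in>{0..n}. R k) = (\<Sum>k\<in>{0..n}. (-1)^(m+n) * T1 k)"
  proof (rule sum.cong[OF refl])
    fix k assume k: "k \<in> {0..n}"
    hence kn: "k \<le> n" and km: "k \<le> m" using nm by auto
    have Bk: "B k = cc n k" using kn by (simp add: B_def)
    have sb: "SB k = cc n k * (- (hh (n + k) - hh k) - (hh (n - k) - hh k))"
      unfolding SB_eq der[OF kn] H1 H2[OF kn] ..
    have sa: "SA k = cc m k * (- (hh (m + k) - hh k) - (hh (m - k) - hh k))"
      unfolding SA_def der[OF km] H1 H2[OF km] ..
    have sgn: "(-1::real)^(m+k) * (-1)^(n+k) = (-1)^(m+n)"
    proof -
      have "(-1::real)^(m+k) * (-1)^(n+k) = (-1)^(m+n) * ((-1)^k * (-1)^k)"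
        by (simp add: power_add mult_ac)
      also have "(-1::real)^k * (-1)^k = 1" by (simp add: power_add[symmetric])
      finally show ?thesis by simp
    qed
    have "R k = cc m k * cc n k * (1 + real k * (hh (m + k) + hh (m - k) + hh (n + k) + hh (n - k) - 4 * hh k))"
    proof -
      have gen1: "\<And>a b x p q r s t :: real. a*b - x*a*(b*(-(p - t) - (q - t))) - x*b*(a*(-(r - t) - (s - t)))
         = a*b*(1 + x*(r + s + p + q - 4*t))" by (simp add: algebra_simps)
      show ?thesis unfolding R_def Bk sb sa gen1 ..
    qed
    also have "\<dots> = ((-1::real)^(m+k) * (-1)^(n+k)) * (real (m + k choose k) * real (m choose k) * real (n + k choose k) * real (n choose k)
            * (1 + real k * (hh (m + k) + hh (m - k) + hh (n + k) + hh (n - k) - 4 * hh k)))"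
    proof -
      have gen2: "\<And>s1 s2 A B2 C D E :: real. (s1*A*B2)*(s2*C*D)*E = (s1*s2)*(A*B2*C*D*E)"
        by (simp add: mult_ac)
      show ?thesis unfolding cc_closed[OF km] cc_closed[OF kn] gen2 ..
    qed
    also have "\<dots> = (-1)^(m+n) * T1 k"
      unfolding sgn T1_def genH_hh ..
    finally show "R k = (-1)^(m+n) * T1 k" .
  qed
  also have "(\<Sum>k\<in>{Suc n..m}. R k) = (\<Sum>k\<in>{Suc n..m}. (-1)^(m+n) * T2 k)"
  proof (rule sum.cong[OF refl])
    fix k assume k: "k \<in> {Suc n..m}"
    hence kn: "n < k" and km: "k \<le> m" by auto
    have Bk: "B k = 0" using kn by (simp add: B_def)
    have "{0..n}-{k} = {0..n}" using kn by auto
    hence sb: "SB k = - real (n + k choose k) / (real k * real (k - 1 choose n))"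
      using pf_out[OF kn] by (simp add: SB_eq)
    have knz: "real k \<noteq> 0" using kn by simp
    have sgn: "(-1::real)^(m+k) = (-1)^(m+n) * (-1)^(k-n)"
    proof -
      have "m + k = (m + n) + (k - n)" using kn by simp
      thus ?thesis by (metis power_add)
    qed
    have "R k = cc m k * real (n + k choose k) / real (k - 1 choose n)"
    proof -
      have gen3: "\<And>a x N D Y :: real. x \<noteq> 0 \<Longrightarrow> a*0 - x*a*(-N/(x*D)) - x*0*Y = a*N/D"
        by (simp add: field_simps)
      show ?thesis unfolding R_def Bk sb by (rule gen3[OF knz])
    qed
    also have "\<dots> = (-1)^(m+k) * real (m + k choose k) * real (m choose k) * real (n + k choose k) / real (k - 1 choose n)"
      unfolding cc_closed[OF km] ..
    also have "\<dots> = (-1)^(m+n) * T2 k"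
    proof -
      have gen4: "\<And>x y A B2 C D :: real. (x*y)*A*B2*C/D = x*(y*A*B2*C/D)" by simp
      show ?thesis unfolding sgn T2_def gen4 ..
    qed
    finally show "R k = (-1)^(m+n) * T2 k" .
  qed
  finally have e0: "1 = (\<Sum>k\<in>{0..n}. (-1)^(m+n) * T1 k) + (\<Sum>k\<in>{Suc n..m}. (-1)^(m+n) * T2 k)" .
  have e1: "(-1)^(m+n) * ((\<Sum>k=0..n. T1 k) + (\<Sum>k=n+1..m. T2 k)) =
     (\<Sum>k\<in>{0..n}. (-1)^(m+n) * T1 k) + (\<Sum>k\<in>{Suc n..m}. (-1)^(m+n) * T2 k)"
    by (simp add: distrib_left sum_distrib_left)
  have e: "(-1)^(m+n) * ((\<Sum>k=0..n. T1 k) + (\<Sum>k=n+1..m. T2 k)) = (1::real)"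
    unfolding e1 by (rule e0[symmetric])
  have sq: "(-1::real)^(m+n) * (-1)^(m+n) = 1" by (simp add: power_add[symmetric])
  have "(\<Sum>k=0..n. T1 k) + (\<Sum>k=n+1..m. T2 k) = (-1)^(m+n) * ((-1)^(m+n) * ((\<Sum>k=0..n. T1 k) + (\<Sum>k=n+1..m. T2 k)))"
    using sq by (simp add: mult.assoc[symmetric])
  also have "\<dots> = (-1)^(m+n)" using e by simp
  finally show ?thesis unfolding T1_def T2_def .
qed

end
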